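(* For every $i\in\{1,\dots,k\}$ and every $\gamma>0$: (a) if $c_i(0)=0$ and $p_i>(1-\varepsilon)+\delta$, then $c_i(\gamma)=0$; (b) if $c_i(0)=1$ and $p_i<(1-\varepsilon)-\delta$, then $c_i(\gamma)=1$.
   Context: Let $k\ge1$, $\varepsilon\in(0,1)$, $\delta\ge0$, examples $\mathbf{z}_1,\dots,\mathbf{z}_k$ with base conformity values $A(\mathbf{z}_i)\in\mathbb{R}$, and numbers $p_i\in[0,1]$ (estimated probabilities of correctness from the base predictor). The update function is $U^*(\mathbf{z}_i;A,\delta)=+1$ if $p_i<(1-\varepsilon)-\delta$, $-1$ if $p_i>(1-\varepsilon)+\delta$, and $0$ otherwise; for $\gamma\ge0$, $A^*_\gamma(\mathbf{z}_i)=A(\mathbf{z}_i)+\gamma U^*(\mathbf{z}_i;A,\delta)$. Define $q(\gamma)$: among indices $i\in\{1,\dots,k\}$ with $\sum_{j=1}^k\mathbb{I}[A^*_\gamma(\mathbf{z}_i)\ge A^*_\gamma(\mathbf{z}_j)]+1\ge\varepsilon(k+1)$, take those minimizing $A^*_\gamma(\mathbf{z}_i)$, and let $q(\gamma)$ be the smallest such index; $t(\gamma)=A^*_\gamma(\mathbf{z}_{q(\gamma)})$. Finally $c_i(\gamma)=\mathbb{I}[A^*_\gamma(\mathbf{z}_i)\ge t(\gamma)]$ indicates whether the prediction for example $i$ is correct. *)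

theory Defs
  imports Complex_Main
begin

text \<open>Examples are indexed by 1..k; A i is the base conformity value A(z_i),
  p i the estimated probability of correctness.\<close>

definition Ustar :: "real \<Rightarrow> real \<Rightarrow> (nat \<Rightarrow> real) \<Rightarrow> nat \<Rightarrow> real" where
  "Ustar eps \<delta> p i =
     (if p i < (1 - eps) - \<delta> then 1
      else if p i > (1 - eps) + \<delta> then -1 else 0)"

definition Astar :: "real \<Rightarrow> real \<Rightarrow> (nat \<Rightarrow> real) \<Rightarrow> (nat \<Rightarrow> real) \<Rightarrow> real \<Rightarrow> nat \<Rightarrow> real" where
  "Astar eps \<delta> A p \<gamma> i = A i + \<gamma> * Ustar eps \<delta> p i"

definition eligible :: "nat \<Rightarrow> real \<Rightarrow> real \<Rightarrow> (nat \<Rightarrow> real) \<Rightarrow> (nat \<Rightarrow> real) \<Rightarrow> real \<Rightarrow> nat set" where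
  "eligible k eps \<delta> A p \<gamma> =
     {i \<in> {1..k}. real (card {j \<in> {1..k}. Astar eps \<delta> A p \<gamma> i \<ge> Astar eps \<delta> A p \<gamma> j}) + 1
                   \<ge> eps * (real k + 1)}"

definition qidx :: "nat \<Rightarrow> real \<Rightarrow> real \<Rightarrow> (nat \<Rightarrow> real) \<Rightarrow> (nat \<Rightarrow> real) \<Rightarrow> real \<Rightarrow> nat" where
  "qidx k eps \<delta> A p \<gamma> =
     (LEAST i. i \<in> eligible k eps \<delta> A p \<gamma> \<and>
        (\<forall>j \<in> eligible k eps \<delta> A p \<gamma>. Astar eps \<delta> A p \<gamma> i \<le> Astar eps \<delta> A p \<gamma> j))"

definition thr :: "nat \<Rightarrow> real \<Rightarrow> real \<Rightarrow> (nat \<Rightarrow> real) \<Rightarrow> (nat \<Rightarrow> real) \<Rightarrow> real \<Rightarrow> real" where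
  "thr k eps \<delta> A p \<gamma> = Astar eps \<delta> A p \<gamma> (qidx k eps \<delta> A p \<gamma>)"

definition correct :: "nat \<Rightarrow> real \<Rightarrow> real \<Rightarrow> (nat \<Rightarrow> real) \<Rightarrow> (nat \<Rightarrow> real) \<Rightarrow> real \<Rightarrow> nat \<Rightarrow> nat" where
  "correct k eps \<delta> A p \<gamma> i =
     (if Astar eps \<delta> A p \<gamma> i \<ge> thr k eps \<delta> A p \<gamma> then 1 else 0)"

end

theory Submission
  imports Defs
begin

lemma key:
  fixes f :: "nat \<Rightarrow> real"
  assumes k: "k \<ge> 1" and e: "eps < 1" and i: "i \<in> {1..k}"
  defines "E \<equiv> {i \<in> {1..k}. real (card {j \<in> {1..k}. f i \<ge> f j}) + 1 \<ge> eps * (real k + 1)}"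
  shows "(f i \<ge> f (LEAST i. i \<in> E \<and> (\<forall>j\<in>E. f i \<le> f j))) \<longleftrightarrow>
         real (card {j \<in> {1..k}. f i \<ge> f j}) + 1 \<ge> eps * (real k + 1)"
proof -
  have fin: "finite (f ` {1..k})" by simp
  have ne: "f ` {1..k} \<noteq> {}" using k by auto
  obtain i0 where i0: "i0 \<in> {1..k}" "f i0 = Max (f ` {1..k})"
    using Max_in[OF fin ne] by auto
  have "{j \<in> {1..k}. f i0 \<ge> f j} = {1..k}" using i0 fin by auto
  hence "real (card {j \<in> {1..k}. f i0 \<ge> f j}) + 1 = real k + 1" by simp
  moreover have "eps * (real k + 1) \<le> real k + 1" using e by (simp add: mult_left_le_one_le mult_le_cancel_right1)
  ultimately have i0E: "i0 \<in> E" using i0 unfolding E_def by auto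
  have finE: "finite E" unfolding E_def by simp
  have neE: "f ` E \<noteq> {}" using i0E by auto
  obtain m where m: "m \<in> E" "f m = Min (f ` E)" using Min_in[OF _ neE] finE by auto
  have "m \<in> E \<and> (\<forall>j\<in>E. f m \<le> f j)" using m finE by auto
  hence q: "(LEAST i. i \<in> E \<and> (\<forall>j\<in>E. f i \<le> f j)) \<in> E \<and>
      (\<forall>j\<in>E. f (LEAST i. i \<in> E \<and> (\<forall>j\<in>E. f i \<le> f j)) \<le> f j)"
    by (rule LeastI)
  define q where "q = (LEAST i. i \<in> E \<and> (\<forall>j\<in>E. f i \<le> f j))"
  have qE: "q \<in> E" and qmin: "\<forall>j\<in>E. f q \<le> f j" using q unfolding q_def by auto
  show ?thesis unfolding q_def[symmetric]
  proof
    assume "f q \<le> f i"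
    hence "{j \<in> {1..k}. f q \<ge> f j} \<subseteq> {j \<in> {1..k}. f i \<ge> f j}" by auto
    hence "card {j \<in> {1..k}. f q \<ge> f j} \<le> card {j \<in> {1..k}. f i \<ge> f j}"
      by (intro card_mono) auto
    thus "real (card {j \<in> {1..k}. f i \<ge> f j}) + 1 \<ge> eps * (real k + 1)"
      using qE unfolding E_def by auto
  next
    assume "real (card {j \<in> {1..k}. f i \<ge> f j}) + 1 \<ge> eps * (real k + 1)"
    hence "i \<in> E" using i unfolding E_def by auto
    thus "f q \<le> f i" using qmin by auto
  qed
qed

lemma correct_iff:
  assumes "k \<ge> 1" "eps < 1" "i \<in> {1..k}"
  shows "correct k eps \<delta> A p \<gamma> i = (if real (card {j \<in> {1..k}. Astar eps \<delta> A p \<gamma> i \<ge> Astar eps \<delta> A p \<gamma> j}) + 1 \<ge> eps * (real k + 1) then 1 else 0)"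
  unfolding correct_def thr_def qidx_def eligible_def
  by (simp only: key[OF assms])

theorem theorem1:
  fixes k :: nat and eps \<delta> \<gamma> :: real and A p :: "nat \<Rightarrow> real" and i :: nat
  assumes "k \<ge> 1" and "0 < eps" and "eps < 1" and "\<delta> \<ge> 0"
    and "\<forall>j \<in> {1..k}. 0 \<le> p j \<and> p j \<le> 1"
    and "i \<in> {1..k}" and "\<gamma> > 0"
  shows "(correct k eps \<delta> A p 0 i = 0 \<and> p i > (1 - eps) + \<delta> \<longrightarrow> correct k eps \<delta> A p \<gamma> i = 0)
       \<and> (correct k eps \<delta> A p 0 i = 1 \<and> p i < (1 - eps) - \<delta> \<longrightarrow> correct k eps \<delta> A p \<gamma> i = 1)"
proof -
  have A0: "\<And>j. Astar eps \<delta> A p 0 j = A j" by (simp add: Astar_def)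
  define B where "B = Astar eps \<delta> A p \<gamma>"
  have Bj: "\<And>j. B j = A j + \<gamma> * Ustar eps \<delta> p j" by (simp add: B_def Astar_def)
  have c0: "correct k eps \<delta> A p 0 i = (if real (card {j \<in> {1..k}. A i \<ge> A j}) + 1 \<ge> eps * (real k + 1) then 1 else 0)"
    using correct_iff[OF assms(1,3,6), of \<delta> A p 0] by (simp only: A0)
  have cg: "correct k eps \<delta> A p \<gamma> i = (if real (card {j \<in> {1..k}. B i \<ge> B j}) + 1 \<ge> eps * (real k + 1) then 1 else 0)"
    using correct_iff[OF assms(1,3,6), of \<delta> A p \<gamma>] by (simp only: B_def)
  have U: "Ustar eps \<delta> p j = -1 \<or> Ustar eps \<delta> p j = 0 \<or> Ustar eps \<delta> p j = 1" for j
    by (simp add: Ustar_def)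
  have fin: "finite {j \<in> {1..k}. P j}" for P :: "nat \<Rightarrow> bool" by simp
  show ?thesis
  proof (intro conjI impI)
    assume h: "correct k eps \<delta> A p 0 i = 0 \<and> p i > (1 - eps) + \<delta>"
    have Ui: "Ustar eps \<delta> p i = -1" using h assms(4) by (simp add: Ustar_def)
    have sub: "{j \<in> {1..k}. B i \<ge> B j} \<subseteq> {j \<in> {1..k}. A i \<ge> A j}"
    proof (rule subsetI)
      fix j assume "j \<in> {j \<in> {1..k}. B i \<ge> B j}"
      hence j: "j \<in> {1..k}" "A i - \<gamma> \<ge> A j + \<gamma> * Ustar eps \<delta> p j" using Bj Ui by auto
      have "A i \<ge> A j" using U[of j] j(2) assms(7) by auto
      thus "j \<in> {j \<in> {1..k}. A i \<ge> A j}" using j(1) by simp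
    qed
    have "card {j \<in> {1..k}. B i \<ge> B j} \<le> card {j \<in> {1..k}. A i \<ge> A j}"
      by (rule card_mono[OF fin sub])
    moreover have "\<not> (real (card {j \<in> {1..k}. A i \<ge> A j}) + 1 \<ge> eps * (real k + 1))"
      using h c0 by (metis one_neq_zero)
    ultimately have "\<not> (real (card {j \<in> {1..k}. B i \<ge> B j}) + 1 \<ge> eps * (real k + 1))"
      by linarith
    thus "correct k eps \<delta> A p \<gamma> i = 0" using cg by simp
  next
    assume h: "correct k eps \<delta> A p 0 i = 1 \<and> p i < (1 - eps) - \<delta>"
    have Ui: "Ustar eps \<delta> p i = 1" using h assms(4) by (simp add: Ustar_def)
    have sub: "{j \<in> {1..k}. A i \<ge> A j} \<subseteq> {j \<in> {1..k}. B i \<ge> B j}"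
    proof (rule subsetI)
      fix j assume "j \<in> {j \<in> {1..k}. A i \<ge> A j}"
      hence j: "j \<in> {1..k}" "A i \<ge> A j" by auto
      have "A i + \<gamma> \<ge> A j + \<gamma> * Ustar eps \<delta> p j" using U[of j] j(2) assms(7) by auto
      hence "B i \<ge> B j" using Bj Ui by simp
      thus "j \<in> {j \<in> {1..k}. B i \<ge> B j}" using j(1) by simp
    qed
    have "card {j \<in> {1..k}. A i \<ge> A j} \<le> card {j \<in> {1..k}. B i \<ge> B j}"
      by (rule card_mono[OF fin sub])
    moreover have "real (card {j \<in> {1..k}. A i \<ge> A j}) + 1 \<ge> eps * (real k + 1)"
      using h c0 by (metis zero_neq_one)
    ultimately have "real (card {j \<in> {1..k}. B i \<ge> B j}) + 1 \<ge> eps * (real k + 1)"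
      by linarith
    thus "correct k eps \<delta> A p \<gamma> i = 1" using cg by simp
  qed
qed

end
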